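(* Let $X\in\mathbb R^{d\times d}$ be symmetric positive definite and $A\in\mathbb R^{d\times d}$ symmetric positive semidefinite. Then for all $0<c\le C$, $$X^{-1/2}AX^{-1/2}\preceq\frac{3(\log C-\log c)}{\pi^2}\,\partial\log(X)[A]+\Big(\frac{12cd}{\pi^2\lambda_{\min}(X)^2}+\frac{12d}{\pi^2C}\Big)\operatorname{Tr}(A)\,I_d.$$
   Context: $\partial\log(X)[A]:=\lim_{\delta\to0}\frac{\log(X+\delta A)-\log X}{\delta}=\int_0^\infty (X+zI_d)^{-1}A(X+zI_d)^{-1}\,dz$ is the directional (Fréchet) derivative of the matrix logarithm at $X$ in direction $A$; $\lambda_{\min}(X)$ is the smallest eigenvalue of $X$; $\preceq$ is the Loewner order. *)

theory Defs
  imports "HOL-Analysis.Analysis"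
begin

definition sym_mat :: "real^'n^'n \<Rightarrow> bool" where
  "sym_mat M \<longleftrightarrow> transpose M = M"

definition psd :: "real^'n^'n \<Rightarrow> bool" where
  "psd M \<longleftrightarrow> sym_mat M \<and> (\<forall>x. 0 \<le> x \<bullet> (M *v x))"

definition pd :: "real^'n^'n \<Rightarrow> bool" where
  "pd M \<longleftrightarrow> sym_mat M \<and> (\<forall>x. x \<noteq> 0 \<longrightarrow> 0 < x \<bullet> (M *v x))"

definition loewner_le :: "real^'n^'n \<Rightarrow> real^'n^'n \<Rightarrow> bool" where
  "loewner_le M N \<longleftrightarrow> psd (N - M)"

definition eigenvalues :: "real^'n^'n \<Rightarrow> real set" where
  "eigenvalues M = {l. \<exists>v. v \<noteq> 0 \<and> M *v v = l *\<^sub>R v}"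

definition lambda_min :: "real^'n^'n \<Rightarrow> real" where
  "lambda_min M = Min (eigenvalues M)"

definition inv_sqrt :: "real^'n^'n \<Rightarrow> real^'n^'n" where
  "inv_sqrt X = (THE S. pd S \<and> S ** S = matrix_inv X)"

text \<open>Frechet derivative of the matrix logarithm at X in direction A, given by the integral formula.\<close>
definition dlog :: "real^'n^'n \<Rightarrow> real^'n^'n \<Rightarrow> real^'n^'n" where
  "dlog X A = integral {0..} (\<lambda>z::real. matrix_inv (X + z *\<^sub>R mat 1) ** A ** matrix_inv (X + z *\<^sub>R mat 1))"

end

theory Submission
  imports Defs "HOL-Real_Asymp.Real_Asymp"
begin

lemma sym_inner:
  fixes M :: "real^'n^'n"
  assumes "transpose M = M"
  shows "(M *v x) \<bullet> y = x \<bullet> (M *v y)"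
proof -
  have "x \<bullet> (M *v y) = (x v* M) \<bullet> y" by (simp add: dot_lmul_matrix)
  also have "x v* M = transpose M *v x" by (simp add: transpose_matrix_vector)
  finally show ?thesis using assms by simp
qed

lemma quad_zero:
  fixes b c :: real
  assumes "\<And>t. 2*t*b + t^2*c \<le> 0" shows "b = 0"
proof (rule ccontr)
  assume "b \<noteq> 0"
  define e where "e = \<bar>c\<bar> + 1"
  have pos: "e > 0" unfolding e_def by simp
  define t where "t = b / e"
  have "2*t*b + t^2*c \<le> 0" by (rule assms)
  hence "(2*t*b + t^2*c) * e^2 \<le> 0" using pos
    by (simp add: mult_nonpos_nonneg)
  moreover have "(2*t*b + t^2*c) * e^2 = b^2 * (2*e + c)"
    unfolding t_def using pos by (simp add: field_simps power2_eq_square)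
  moreover have "b^2 * (2*e + c) > 0" using \<open>b \<noteq> 0\<close> unfolding e_def by (intro mult_pos_pos) auto
  ultimately show False by linarith
qed

lemma eigvec_exists:
  fixes M :: "real^'n^'n"
  assumes sym: "transpose M = M" and U: "subspace U" and inv: "\<And>x. x \<in> U \<Longrightarrow> M *v x \<in> U"
    and ne: "U \<noteq> {0}"
  shows "\<exists>v\<in>U. norm v = 1 \<and> M *v v = (v \<bullet> (M *v v)) *\<^sub>R v"
proof -
  let ?S = "U \<inter> sphere 0 1"
  have cS: "compact ?S"
    using closed_subspace[OF U] compact_sphere by (simp add: closed_Int_compact)
  obtain u where u: "u \<in> U" "u \<noteq> 0" using ne U subspace_0 by blast
  have "u /\<^sub>R norm u \<in> ?S" using u U by (simp add: subspace_scale)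
  hence neS: "?S \<noteq> {}" by blast
  have cont: "continuous_on ?S (\<lambda>v. v \<bullet> (M *v v))"
    by (intro continuous_intros matrix_vector_mult_linear_continuous_on)
  obtain v where v: "v \<in> ?S" and vmax: "\<And>w. w \<in> ?S \<Longrightarrow> w \<bullet> (M *v w) \<le> v \<bullet> (M *v v)"
    using continuous_attains_sup[OF cS neS cont] by blast
  define \<mu> where "\<mu> = v \<bullet> (M *v v)"
  have vU: "v \<in> U" and nv: "norm v = 1" using v by auto
  have vv: "v \<bullet> v = 1" using nv by (simp add: norm_eq_1)
  have max: "w \<bullet> (M *v w) \<le> \<mu> * (w \<bullet> w)" if w: "w \<in> U" for w
  proof (cases "w = 0")
    case True then show ?thesis by simp
  next
    case False
    let ?w = "w /\<^sub>R norm w"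
    have "?w \<in> ?S" using w False U by (simp add: subspace_scale)
    hence "?w \<bullet> (M *v ?w) \<le> \<mu>" using vmax \<mu>_def by blast
    moreover have "?w \<bullet> (M *v ?w) = (w \<bullet> (M *v w)) / (norm w)^2"
      by (simp add: matrix_vector_mult_scaleR power2_eq_square divide_inverse)
    moreover have "(norm w)^2 = w \<bullet> w" by (simp add: power2_norm_eq_inner)
    moreover have "norm w > 0" using False by simp
    ultimately have "(w \<bullet> (M *v w)) / (w \<bullet> w) \<le> \<mu>" by simp
    moreover have "w \<bullet> w > 0" using False by simp
    ultimately show ?thesis by (simp add: divide_simps mult.commute)
  qed
  have orth: "y \<bullet> (M *v v) = 0" if y: "y \<in> U" "y \<bullet> v = 0" for y
  proof -
    have "2*t*(y \<bullet> (M *v v)) + t^2*(y \<bullet> (M *v y) - \<mu> * (y \<bullet> y)) \<le> 0" for t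
    proof -
      have wU: "v + t *\<^sub>R y \<in> U" using U vU y by (simp add: subspace_add subspace_scale)
      have e1: "(v + t *\<^sub>R y) \<bullet> (M *v (v + t *\<^sub>R y))
          = \<mu> + 2*t*(y \<bullet> (M *v v)) + t^2 * (y \<bullet> (M *v y))"
      proof -
        have "v \<bullet> (M *v y) = y \<bullet> (M *v v)"
          using sym_inner[OF sym, of v y] by (simp add: inner_commute)
        thus ?thesis
          by (simp add: \<mu>_def matrix_vector_right_distrib matrix_vector_mult_scaleR inner_add_left
              inner_add_right algebra_simps power2_eq_square)
      qed
      have e2: "(v + t *\<^sub>R y) \<bullet> (v + t *\<^sub>R y) = 1 + t^2 * (y \<bullet> y)"
        using vv y(2) by (simp add: inner_add_left inner_add_right inner_commute power2_eq_square)
      have "\<mu> + 2*t*(y \<bullet> (M *v v)) + t^2 * (y \<bullet> (M *v y)) \<le> \<mu> * (1 + t^2 * (y \<bullet> y))"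
        using max[OF wU] by (simp only: e1 e2)
      thus ?thesis by (simp add: ring_distribs mult.left_commute)
    qed
    thus ?thesis by (rule quad_zero)
  qed
  define z where "z = M *v v - \<mu> *\<^sub>R v"
  have zU: "z \<in> U" unfolding z_def using U inv[OF vU] vU by (simp add: subspace_diff subspace_scale)
  have zv: "z \<bullet> v = 0"
  proof -
    have "(M *v v) \<bullet> v = v \<bullet> (M *v v)" by (rule inner_commute)
    thus ?thesis unfolding z_def using vv by (simp add: inner_diff_left \<mu>_def)
  qed
  have "z \<bullet> z = z \<bullet> (M *v v) - \<mu> * (z \<bullet> v)" unfolding z_def by (simp add: inner_diff_right)
  also have "\<dots> = 0" using orth[OF zU zv] zv by simp
  finally have "z = 0" by simp
  thus ?thesis using vU nv unfolding z_def \<mu>_def by auto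
qed

lemma spectral_subspace:
  fixes M :: "real^'n^'n"
  assumes sym: "transpose M = M"
  shows "subspace U \<Longrightarrow> (\<And>x. x \<in> U \<Longrightarrow> M *v x \<in> U) \<Longrightarrow>
    \<exists>B. B \<subseteq> U \<and> pairwise orthogonal B \<and> (\<forall>b\<in>B. norm b = 1 \<and> (\<exists>l. M *v b = l *\<^sub>R b)) \<and> span B = U"
proof (induction "dim U" arbitrary: U rule: less_induct)
  case less
  show ?case
  proof (cases "U = {0}")
    case True then show ?thesis by (intro exI[of _ "{}"]) auto
  next
    case False
    obtain v where vU: "v \<in> U" and nv: "norm v = 1" and ev: "M *v v = (v \<bullet> (M *v v)) *\<^sub>R v"
      using eigvec_exists[OF sym less.prems(1) less.prems(2) False] by blast
    define \<mu> where "\<mu> = v \<bullet> (M *v v)"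
    have vv: "v \<bullet> v = 1" using nv by (simp add: norm_eq_1)
    define U' where "U' = {y \<in> U. v \<bullet> y = 0}"
    have sub: "subspace U'"
      using less.prems(1) unfolding U'_def subspace_def by (auto simp: inner_add_right)
    have inv': "M *v y \<in> U'" if "y \<in> U'" for y
    proof -
      have "v \<bullet> (M *v y) = (M *v v) \<bullet> y" using sym_inner[OF sym, of v y] by simp
      also have "\<dots> = \<mu> * (v \<bullet> y)" using ev \<mu>_def by (metis inner_scaleR_left)
      finally show ?thesis using that less.prems(2) unfolding U'_def by auto
    qed
    have "v \<notin> U'" using vv unfolding U'_def by auto
    hence "U' \<subset> U" using vU unfolding U'_def by blast
    moreover have "span U' = U'" "span U = U" using sub less.prems(1) by (simp_all add: span_eq_iff)
    ultimately have "span U' \<subset> span U" by (simp only:)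
    hence "dim U' < dim U" by (rule dim_psubset)
    then obtain B' where B': "B' \<subseteq> U'" "pairwise orthogonal B'"
        "\<forall>b\<in>B'. norm b = 1 \<and> (\<exists>l. M *v b = l *\<^sub>R b)" "span B' = U'"
      using less.hyps[OF _ sub inv'] by blast
    show ?thesis
    proof (intro exI[of _ "insert v B'"] conjI)
      show "insert v B' \<subseteq> U" using vU B'(1) unfolding U'_def by auto
      show "pairwise orthogonal (insert v B')"
        using B'(1,2) unfolding U'_def
        by (auto simp: pairwise_insert orthogonal_def inner_commute)
      show "\<forall>b\<in>insert v B'. norm b = 1 \<and> (\<exists>l. M *v b = l *\<^sub>R b)" using B'(3) nv ev by auto
      show "span (insert v B') = U"
      proof
        show "span (insert v B') \<subseteq> U"
          using vU B'(1) less.prems(1) unfolding U'_def by (intro span_minimal) auto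
        show "U \<subseteq> span (insert v B')"
        proof
          fix u assume u: "u \<in> U"
          have "u - (v \<bullet> u) *\<^sub>R v \<in> U'"
            using u vU less.prems(1) vv unfolding U'_def
            by (auto simp: subspace_diff subspace_scale inner_diff_right)
          hence "u - (v \<bullet> u) *\<^sub>R v \<in> span B'" using B'(4) by simp
          thus "u \<in> span (insert v B')" by (auto simp: span_breakdown_eq)
        qed
      qed
    qed
  qed
qed

definition outer :: "real^'n \<Rightarrow> real^'n^'n" where
  "outer a = (\<chi> i j. a$i * a$j)"

definition fX :: "('n \<Rightarrow> real^'n) \<Rightarrow> ('n \<Rightarrow> real) \<Rightarrow> real^'n^'n" where
  "fX u f = (\<Sum>k\<in>UNIV. f k *\<^sub>R outer (u k))"

definition eigsys :: "real^'n^'n \<Rightarrow> ('n \<Rightarrow> real^'n) \<Rightarrow> ('n \<Rightarrow> real) \<Rightarrow> bool" where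
  "eigsys M u x \<longleftrightarrow> (\<forall>i j. u i \<bullet> u j = (if i = j then 1 else 0)) \<and> (\<forall>i. M *v u i = x i *\<^sub>R u i)
     \<and> (\<forall>v. v = (\<Sum>i\<in>UNIV. (u i \<bullet> v) *\<^sub>R u i))"

lemma spectral:
  fixes M :: "real^'n^'n"
  assumes sym: "transpose M = M"
  shows "\<exists>u x. eigsys M u x"
proof -
  obtain B where B: "pairwise orthogonal B" "\<forall>b\<in>B. norm b = 1 \<and> (\<exists>l. M *v b = l *\<^sub>R b)"
     "span B = UNIV"
    using spectral_subspace[OF sym, of UNIV] by auto
  have "0 \<notin> B" using B(2) by auto
  hence ind: "independent B" using B(1) pairwise_orthogonal_independent by blast
  hence fin: "finite B" and cardB: "card B = dim (span B)" using indep_card_eq_dim_span by auto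
  hence "card B = CARD('n)" using B(3) by (simp add: dim_UNIV)
  then obtain h where h: "bij_betw h (UNIV::'n set) B"
    using finite_same_card_bij[OF finite fin] by auto
  define x where "x i = (SOME l. M *v h i = l *\<^sub>R h i)" for i
  have ev: "M *v h i = x i *\<^sub>R h i" for i
  proof -
    have "h i \<in> B" using h bij_betwE by blast
    then obtain l where "M *v h i = l *\<^sub>R h i" using B(2) by blast
    thus ?thesis unfolding x_def by (rule someI)
  qed
  have on: "h i \<bullet> h j = (if i = j then 1 else 0)" for i j
  proof (cases "i = j")
    case True
    have "h i \<in> B" using h bij_betwE by blast
    hence "norm (h i) = 1" using B(2) by blast
    thus ?thesis using True by (simp add: norm_eq_1)
  next
    case False
    have "h i \<in> B" "h j \<in> B" using h bij_betwE by blast+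
    moreover have "h i \<noteq> h j" using h False by (metis bij_betw_iff_bijections UNIV_I)
    ultimately show ?thesis using B(1) False by (auto simp: pairwise_def orthogonal_def)
  qed
  have comp: "v = (\<Sum>i\<in>UNIV. (h i \<bullet> v) *\<^sub>R h i)" for v
  proof -
    define w where "w = v - (\<Sum>i\<in>UNIV. (h i \<bullet> v) *\<^sub>R h i)"
    have wo: "h j \<bullet> w = 0" for j
    proof -
      have "h j \<bullet> (\<Sum>i\<in>UNIV. (h i \<bullet> v) *\<^sub>R h i) = (\<Sum>i\<in>UNIV. (h i \<bullet> v) * (h j \<bullet> h i))"
        by (simp add: inner_sum_right)
      also have "\<dots> = (\<Sum>i\<in>UNIV. if i = j then h j \<bullet> v else 0)"
        by (intro sum.cong) (auto simp: on)
      also have "\<dots> = h j \<bullet> v" by simp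
      finally show ?thesis unfolding w_def by (simp add: inner_diff_right)
    qed
    have "orthogonal w w"
    proof (rule orthogonal_to_span)
      show "w \<in> span B" using B(3) by simp
      fix y assume "y \<in> B"
      then obtain j where "y = h j" using h by (metis bij_betw_imp_surj_on imageE)
      thus "orthogonal w y" using wo by (simp add: orthogonal_def inner_commute)
    qed
    hence "w = 0" by (simp add: orthogonal_self)
    thus ?thesis unfolding w_def by simp
  qed
  show ?thesis unfolding eigsys_def using ev on comp by blast
qed

definition onb :: "('n \<Rightarrow> real^'n) \<Rightarrow> bool" where
  "onb u \<longleftrightarrow> (\<forall>i j. u i \<bullet> u j = (if i = j then 1 else 0)) \<and> (\<forall>v. v = (\<Sum>i\<in>UNIV. (u i \<bullet> v) *\<^sub>R u i))"

lemma eigsys_onb: "eigsys M u x \<Longrightarrow> onb u"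
  unfolding eigsys_def onb_def by blast

lemma onb_inner: "onb u \<Longrightarrow> u i \<bullet> u j = (if i = j then 1 else 0)"
  unfolding onb_def by blast

lemma onb_expand: "onb u \<Longrightarrow> v = (\<Sum>i\<in>UNIV. (u i \<bullet> v) *\<^sub>R u i)"
  unfolding onb_def by blast

lemma onb_coef:
  assumes "onb u"
  shows "u k \<bullet> (\<Sum>l\<in>UNIV. c l *\<^sub>R u l) = c k"
proof -
  have "u k \<bullet> (\<Sum>l\<in>UNIV. c l *\<^sub>R u l) = (\<Sum>l\<in>UNIV. c l * (u k \<bullet> u l))"
    by (simp add: inner_sum_right)
  also have "\<dots> = (\<Sum>l\<in>UNIV. if l = k then c k else 0)"
    by (intro sum.cong) (auto simp: onb_inner[OF assms])
  finally show ?thesis by simp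
qed

lemma onb_inner_sum:
  assumes "onb u"
  shows "(\<Sum>l\<in>UNIV. c l *\<^sub>R u l) \<bullet> (\<Sum>l\<in>UNIV. d l *\<^sub>R u l) = (\<Sum>k\<in>UNIV. c k * d k)"
  by (simp add: inner_sum_left onb_coef[OF assms])

lemma sum_mv:
  fixes A :: "'k \<Rightarrow> real^'n^'m"
  shows "(\<Sum>k\<in>S. A k) *v v = (\<Sum>k\<in>S. A k *v v)"
proof (cases "finite S")
  case True then show ?thesis
    by (induction S rule: finite_induct) (auto simp: matrix_vector_mult_add_rdistrib)
qed simp

lemma outer_mv: "outer a *v v = (a \<bullet> v) *\<^sub>R a"
  unfolding outer_def
  by (simp add: vec_eq_iff matrix_vector_mult_def inner_vec_def sum_distrib_left algebra_simps)

lemma fX_mv: "fX u f *v v = (\<Sum>k\<in>UNIV. (f k * (u k \<bullet> v)) *\<^sub>R u k)"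
  unfolding fX_def sum_mv
  by (simp add: outer_mv flip: scaleR_matrix_vector_assoc)

lemma fX_coef: "onb u \<Longrightarrow> u k \<bullet> (fX u f *v v) = f k * (u k \<bullet> v)"
  unfolding fX_mv by (rule onb_coef)

lemma fX_mult:
  assumes "onb u"
  shows "fX u f ** fX u g = fX u (\<lambda>k. f k * g k)"
  unfolding matrix_eq
proof
  fix v
  have "(fX u f ** fX u g) *v v = fX u f *v (fX u g *v v)" by (simp add: matrix_vector_mul_assoc)
  also have "\<dots> = fX u (\<lambda>k. f k * g k) *v v"
    by (simp add: fX_mv[of u f] fX_coef[OF assms] fX_mv[of u "\<lambda>k. f k * g k"] mult.assoc)
  finally show "(fX u f ** fX u g) *v v = fX u (\<lambda>k. f k * g k) *v v" .
qed

lemma fX_one: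
  assumes "onb u"
  shows "fX u (\<lambda>k. 1) = mat 1"
  unfolding matrix_eq using onb_expand[OF assms] by (simp add: fX_mv)

lemma fX_add: "fX u (\<lambda>k. f k + g k) = fX u f + fX u g"
  unfolding fX_def by (simp add: scaleR_add_left sum.distrib)

lemma fX_scale: "fX u (\<lambda>k. c * f k) = c *\<^sub>R fX u f"
  unfolding fX_def by (simp add: scaleR_sum_right)

lemma fX_entry: "fX u f $ i $ j = (\<Sum>k\<in>UNIV. f k * (u k $ i * u k $ j))"
  unfolding fX_def outer_def by (simp add: sum_component)

lemma fX_sym: "transpose (fX u f) = fX u f"
  by (simp add: vec_eq_iff transpose_def fX_entry mult.commute)

lemma eigsys_fX:
  assumes "eigsys M u x"
  shows "M = fX u x"
  unfolding matrix_eq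
proof
  fix v
  have on: "onb u" using assms by (rule eigsys_onb)
  have ev: "M *v u i = x i *\<^sub>R u i" for i using assms unfolding eigsys_def by blast
  have "M *v v = M *v (\<Sum>i\<in>UNIV. (u i \<bullet> v) *\<^sub>R u i)" using onb_expand[OF on] by metis
  also have "\<dots> = (\<Sum>i\<in>UNIV. (u i \<bullet> v) *\<^sub>R (x i *\<^sub>R u i))"
    by (simp add: vec.sum matrix_vector_mult_scaleR ev)
  also have "\<dots> = fX u x *v v" by (simp add: fX_mv mult.commute)
  finally show "M *v v = fX u x *v v" .
qed

lemma fX_quad:
  assumes "onb u"
  shows "v \<bullet> (fX u f *v v) = (\<Sum>k\<in>UNIV. f k * (u k \<bullet> v)^2)"
  by (simp add: fX_mv inner_sum_right power2_eq_square inner_commute mult.assoc)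

lemma parseval:
  assumes "onb u"
  shows "v \<bullet> v = (\<Sum>k\<in>UNIV. (u k \<bullet> v)^2)"
  using fX_quad[OF assms, of v "\<lambda>k. 1"] fX_one[OF assms] by simp

lemma fX_norm2:
  assumes "onb u"
  shows "(fX u f *v v) \<bullet> (fX u f *v v) = (\<Sum>k\<in>UNIV. (f k)^2 * (u k \<bullet> v)^2)"
  by (simp add: fX_mv onb_inner_sum[OF assms] power2_eq_square mult.assoc mult.left_commute)

lemma trace_sum: "trace (\<Sum>k\<in>S. A k) = (\<Sum>k\<in>S. trace (A k))"
  unfolding trace_def by (simp add: sum_component sum.swap[of _ S])

lemma trace_scaleR: "trace (c *\<^sub>R (A::real^'n^'n)) = c * trace A"
  unfolding trace_def by (simp add: sum_distrib_left)

lemma trace_outer: "trace (outer a) = a \<bullet> a"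
  unfolding trace_def outer_def by (simp add: inner_vec_def)

lemma trace_fX:
  assumes "onb u"
  shows "trace (fX u f) = (\<Sum>k\<in>UNIV. f k)"
  unfolding fX_def trace_sum by (simp add: trace_scaleR trace_outer onb_inner[OF assms])

lemma eigsys_ev: "eigsys M u x \<Longrightarrow> M *v u i = x i *\<^sub>R u i"
  unfolding eigsys_def by blast

lemma pd_sym: "pd M \<Longrightarrow> transpose M = M" unfolding pd_def sym_mat_def by blast
lemma psd_sym: "psd M \<Longrightarrow> transpose M = M" unfolding psd_def sym_mat_def by blast

lemma matrix_inv_eq:
  fixes A B :: "real^'n^'n"
  assumes "A ** B = mat 1" "B ** A = mat 1"
  shows "matrix_inv A = B"
proof -
  have ex: "\<exists>A'. A ** A' = mat 1 \<and> A' ** A = mat 1" using assms by blast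
  define C where "C = matrix_inv A"
  have C: "A ** C = mat 1" "C ** A = mat 1" using someI_ex[OF ex] unfolding C_def matrix_inv_def by auto
  have "C = C ** (A ** B)" using assms by (simp add: matrix_mul_rid)
  also have "\<dots> = (C ** A) ** B" by (simp add: matrix_mul_assoc)
  also have "\<dots> = B" using C by (simp add: matrix_mul_lid)
  finally show ?thesis unfolding C_def .
qed

lemma transpose_diff': "transpose (A - B :: real^'n^'n) = transpose A - transpose B"
  by (simp add: vec_eq_iff transpose_def)

lemma onb_nonzero_coef:
  fixes u :: "'n \<Rightarrow> real^'n" and v :: "real^'n"
  assumes "onb u" "v \<noteq> 0"
  shows "\<exists>k. u k \<bullet> v \<noteq> 0"
proof (rule ccontr)
  assume "\<not> ?thesis"
  hence "v = (\<Sum>i\<in>UNIV. (u i \<bullet> v) *\<^sub>R u i) \<Longrightarrow> v = 0" by simp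
  thus False using onb_expand[OF assms(1)] assms(2) by blast
qed

lemma pd_fX:
  fixes u :: "'n \<Rightarrow> real^'n"
  assumes "onb u" "\<And>k. f k > 0"
  shows "pd (fX u f)"
  unfolding pd_def sym_mat_def
proof (intro conjI allI impI)
  show "transpose (fX u f) = fX u f" by (rule fX_sym)
  fix v :: "real^'n" assume "v \<noteq> 0"
  then obtain k where k: "u k \<bullet> v \<noteq> 0" using onb_nonzero_coef[OF assms(1)] by blast
  have "0 < f k * (u k \<bullet> v)^2" using k assms(2) by simp
  also have "\<dots> \<le> (\<Sum>k\<in>UNIV. f k * (u k \<bullet> v)^2)"
    using assms(2) by (intro member_le_sum) (simp_all add: less_imp_le)
  finally show "0 < v \<bullet> (fX u f *v v)" by (simp add: fX_quad[OF assms(1)])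
qed

lemma eig_pos:
  assumes "pd X" "eigsys X u x"
  shows "x k > 0"
proof -
  have on: "onb u" using assms(2) by (rule eigsys_onb)
  have "u k \<noteq> 0" using onb_inner[OF on, of k k] by auto
  hence "0 < u k \<bullet> (X *v u k)" using assms(1) unfolding pd_def by blast
  also have "\<dots> = x k" using eigsys_ev[OF assms(2)] onb_inner[OF on, of k k] by simp
  finally show ?thesis .
qed

lemma shift_fX:
  assumes "eigsys X u x"
  shows "X + z *\<^sub>R mat 1 = fX u (\<lambda>k. x k + z)"
proof -
  have on: "onb u" using assms by (rule eigsys_onb)
  have "fX u (\<lambda>k. x k + z) = fX u x + fX u (\<lambda>k. z * 1)" using fX_add[of u x "\<lambda>k. z * 1"] by simp
  also have "\<dots> = X + z *\<^sub>R mat 1" using eigsys_fX[OF assms] fX_one[OF on] fX_scale[of u z "\<lambda>k. 1"]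
    by simp
  finally show ?thesis by simp
qed

lemma inv_shift:
  assumes "eigsys X u x" "\<And>k. x k + z \<noteq> 0"
  shows "matrix_inv (X + z *\<^sub>R mat 1) = fX u (\<lambda>k. 1 / (x k + z))"
proof -
  have on: "onb u" using assms(1) by (rule eigsys_onb)
  show ?thesis unfolding shift_fX[OF assms(1)]
    by (rule matrix_inv_eq) (simp_all add: fX_mult[OF on] assms(2) fX_one[OF on])
qed

lemma sqrt_unique:
  fixes S T :: "real^'n^'n"
  assumes S: "pd S" and T: "pd T" and eq: "S ** S = T ** T"
  shows "S = T"
proof -
  have sS: "transpose S = S" and sT: "transpose T = T" using S T by (auto simp: pd_sym)
  have sD: "transpose (S - T) = S - T" using sS sT by (simp add: transpose_diff')
  obtain w d where es: "eigsys (S - T) w d" using spectral[OF sD] by blast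
  have on: "onb w" using es by (rule eigsys_onb)
  have d0: "d k = 0" for k
  proof -
    let ?v = "w k"
    have vv: "?v \<bullet> ?v = 1" using onb_inner[OF on, of k k] by simp
    hence vnz: "?v \<noteq> 0" by auto
    have Dv: "(S - T) *v ?v = d k *\<^sub>R ?v" using eigsys_ev[OF es] by blast
    hence Sv: "S *v ?v = T *v ?v + d k *\<^sub>R ?v" by (simp add: matrix_vector_mult_diff_rdistrib algebra_simps)
    have "(S *v ?v) \<bullet> (S *v ?v) = ?v \<bullet> ((S ** S) *v ?v)"
      using sym_inner[OF sS, of ?v "S *v ?v"] by (simp only: matrix_vector_mul_assoc)
    also have "\<dots> = ?v \<bullet> ((T ** T) *v ?v)" using eq by simp
    also have "\<dots> = (T *v ?v) \<bullet> (T *v ?v)"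
      using sym_inner[OF sT, of ?v "T *v ?v"] by (simp only: matrix_vector_mul_assoc)
    finally have e1: "(S *v ?v) \<bullet> (S *v ?v) = (T *v ?v) \<bullet> (T *v ?v)" .
    have tv: "(T *v ?v) \<bullet> ?v = ?v \<bullet> (T *v ?v)" by (rule inner_commute)
    have ex: "(T *v ?v + d k *\<^sub>R ?v) \<bullet> (T *v ?v + d k *\<^sub>R ?v)
       = (T *v ?v) \<bullet> (T *v ?v) + d k * ((T *v ?v) \<bullet> ?v) + d k * (?v \<bullet> (T *v ?v)) + d k * d k * (?v \<bullet> ?v)"
      by (simp add: inner_add_left inner_add_right ring_distribs)
    have "(S *v ?v) \<bullet> (S *v ?v) = (T *v ?v) \<bullet> (T *v ?v) + 2 * d k * (?v \<bullet> (T *v ?v)) + (d k)^2"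
      unfolding Sv ex tv vv by (simp add: power2_eq_square)
    with e1 have z: "d k * (2 * (?v \<bullet> (T *v ?v)) + d k) = 0" by (simp add: algebra_simps power2_eq_square)
    have "?v \<bullet> (S *v ?v) = ?v \<bullet> (T *v ?v) + d k" unfolding Sv using vv by (simp add: inner_add_right)
    moreover have "?v \<bullet> (S *v ?v) > 0" "?v \<bullet> (T *v ?v) > 0" using S T vnz unfolding pd_def by auto
    ultimately have "2 * (?v \<bullet> (T *v ?v)) + d k > 0" by linarith
    with z show ?thesis by simp
  qed
  have "S - T = fX w d" by (rule eigsys_fX[OF es])
  also have "\<dots> = fX w (\<lambda>k. 0 * 1)" using d0 by (metis mult_zero_left)
  also have "\<dots> = 0" by (simp only: fX_scale) simp
  finally show ?thesis by simp
qed

lemma inv_sqrt_fX: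
  assumes "pd X" "eigsys X u x"
  shows "inv_sqrt X = fX u (\<lambda>k. 1 / sqrt (x k))"
proof -
  have on: "onb u" using assms(2) by (rule eigsys_onb)
  have xp: "x k > 0" for k by (rule eig_pos[OF assms])
  have P: "pd (fX u (\<lambda>k. 1 / sqrt (x k))) \<and> fX u (\<lambda>k. 1 / sqrt (x k)) ** fX u (\<lambda>k. 1 / sqrt (x k)) = matrix_inv X"
  proof
    show "pd (fX u (\<lambda>k. 1 / sqrt (x k)))" using xp by (intro pd_fX[OF on]) simp
    have "matrix_inv X = matrix_inv (X + 0 *\<^sub>R mat 1)" by simp
    also have "\<dots> = fX u (\<lambda>k. 1 / (x k + 0))" using xp by (intro inv_shift[OF assms(2)]) (simp add: less_imp_neq[symmetric])
    finally show "fX u (\<lambda>k. 1 / sqrt (x k)) ** fX u (\<lambda>k. 1 / sqrt (x k)) = matrix_inv X"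
      using xp by (simp add: fX_mult[OF on] real_sqrt_mult[symmetric] less_imp_le)
  qed
  show ?thesis unfolding inv_sqrt_def
  proof (rule the_equality)
    show "pd (fX u (\<lambda>k. 1 / sqrt (x k))) \<and> fX u (\<lambda>k. 1 / sqrt (x k)) ** fX u (\<lambda>k. 1 / sqrt (x k)) = matrix_inv X" by (rule P)
    fix S assume "pd S \<and> S ** S = matrix_inv X"
    thus "S = fX u (\<lambda>k. 1 / sqrt (x k))" using P sqrt_unique by metis
  qed
qed

lemma lambda_min_props:
  assumes "pd X" "eigsys X u x"
  shows "0 < lambda_min X" "\<And>k. lambda_min X \<le> x k"
proof -
  have on: "onb u" using assms(2) by (rule eigsys_onb)
  have sub: "eigenvalues X \<subseteq> range x"
  proof
    fix l assume "l \<in> eigenvalues X"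
    then obtain v where v: "v \<noteq> 0" "X *v v = l *\<^sub>R v" unfolding eigenvalues_def by blast
    obtain k where k: "u k \<bullet> v \<noteq> 0" using onb_nonzero_coef[OF on v(1)] by blast
    have "l * (u k \<bullet> v) = u k \<bullet> (X *v v)" using v(2) by simp
    also have "\<dots> = (X *v u k) \<bullet> v" using sym_inner[OF pd_sym[OF assms(1)], of "u k" v] by simp
    also have "\<dots> = x k * (u k \<bullet> v)" using eigsys_ev[OF assms(2)] by simp
    finally have "l = x k" using k by simp
    thus "l \<in> range x" by simp
  qed
  have mem: "x k \<in> eigenvalues X" for k
  proof -
    have "u k \<noteq> 0" using onb_inner[OF on, of k k] by auto
    thus ?thesis using eigsys_ev[OF assms(2)] unfolding eigenvalues_def by blast
  qed
  have fin: "finite (eigenvalues X)" using sub by (rule finite_subset) simp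
  have ne: "eigenvalues X \<noteq> {}" using mem by blast
  show "lambda_min X \<le> x k" for k unfolding lambda_min_def using fin mem by simp
  have "lambda_min X \<in> eigenvalues X" unfolding lambda_min_def using fin ne by (rule Min_in)
  then obtain k where "lambda_min X = x k" using sub by blast
  thus "0 < lambda_min X" using eig_pos[OF assms] by simp
qed

lemma psd_trace_bound:
  assumes "psd A"
  shows "y \<bullet> (A *v y) \<le> trace A * (y \<bullet> y)" "0 \<le> trace A"
proof -
  obtain w a where es: "eigsys A w a" using spectral[OF psd_sym[OF assms]] by blast
  have on: "onb w" using es by (rule eigsys_onb)
  have A: "A = fX w a" by (rule eigsys_fX[OF es])
  have ap: "a k \<ge> 0" for k
  proof -
    have "0 \<le> w k \<bullet> (A *v w k)" using assms unfolding psd_def by blast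
    also have "\<dots> = a k" using eigsys_ev[OF es] onb_inner[OF on, of k k] by simp
    finally show ?thesis .
  qed
  have tr: "trace A = (\<Sum>k\<in>UNIV. a k)" unfolding A by (rule trace_fX[OF on])
  show "0 \<le> trace A" unfolding tr using ap by (simp add: sum_nonneg)
  have le: "(w k \<bullet> y)^2 \<le> y \<bullet> y" for k
  proof -
    have "(w k \<bullet> y)^2 \<le> (\<Sum>j\<in>UNIV. (w j \<bullet> y)^2)" by (rule member_le_sum) auto
    thus ?thesis using parseval[OF on, of y] by simp
  qed
  have "y \<bullet> (A *v y) = (\<Sum>k\<in>UNIV. a k * (w k \<bullet> y)^2)" unfolding A by (rule fX_quad[OF on])
  also have "\<dots> \<le> (\<Sum>k\<in>UNIV. a k * (y \<bullet> y))"
    by (intro sum_mono mult_left_mono le ap)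
  also have "\<dots> = trace A * (y \<bullet> y)" unfolding tr by (simp add: sum_distrib_right)
  finally show "y \<bullet> (A *v y) \<le> trace A * (y \<bullet> y)" .
qed

lemma int_sqrt_res:
  fixes p :: real
  assumes p: "p > 0"
  shows "((\<lambda>a. 1 / (sqrt a * (p + a))) has_integral pi / sqrt p) {0..}"
proof -
  define F where "F a = 2 / sqrt p * arctan (sqrt a / sqrt p)" for a
  have der: "(F has_real_derivative 1 / (sqrt a * (p + a))) (at a)" if a: "a > 0" for a
  proof -
    have d1: "((\<lambda>a. sqrt a / sqrt p) has_real_derivative (inverse (sqrt a) / 2 / sqrt p)) (at a)"
      using DERIV_real_sqrt[OF a] by (rule DERIV_cdivide)
    have "((\<lambda>a. arctan (sqrt a / sqrt p)) has_real_derivative inverse (1 + (sqrt a / sqrt p)^2) * (inverse (sqrt a) / 2 / sqrt p)) (at a)"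
      by (rule DERIV_chain2[OF DERIV_arctan d1])
    hence "(F has_real_derivative 2 / sqrt p * (inverse (1 + (sqrt a / sqrt p)^2) * (inverse (sqrt a) / 2 / sqrt p))) (at a)"
      unfolding F_def by (rule DERIV_cmult)
    moreover have "2 / sqrt p * (inverse (1 + (sqrt a / sqrt p)^2) * (inverse (sqrt a) / 2 / sqrt p)) = 1 / (sqrt a * (p + a))"
    proof -
      have e: "(sqrt a / sqrt p)^2 = a/p" using a p by (simp add: power_divide)
      have i: "inverse (1 + a/p) = p/(p+a)" using a p by (simp add: field_simps)
      have aux: "2 / s * (p/(p+a) * (inverse b / 2 / s)) = p / ((s * s) * ((p+a) * b))"
        if "s > 0" "b > 0" for s b using that a p by (simp add: divide_simps)
      have "2 / sqrt p * (p/(p+a) * (inverse (sqrt a) / 2 / sqrt p)) = p / ((sqrt p * sqrt p) * ((p+a) * sqrt a))"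
        using a p by (intro aux) auto
      also have "sqrt p * sqrt p = p" using p by simp
      also have "p / (p * ((p+a) * b)) = 1 / (b * (p + a))" if "b > 0" for b
        using that a p by (simp add: divide_simps)
      hence "p / (p * ((p+a) * sqrt a)) = 1 / (sqrt a * (p + a))" using a by simp
      finally show ?thesis unfolding e i .
    qed
    ultimately show ?thesis by simp
  qed
  have int: "((\<lambda>a. 1 / (sqrt a * (p + a))) has_integral F y - F 0) {0..y}" if "y \<ge> 0" for y
  proof (rule fundamental_theorem_of_calculus_interior[OF that])
    show "continuous_on {0..y} F" unfolding F_def using p by (intro continuous_intros) auto
    fix a assume "a \<in> {0<..<y}"
    thus "(F has_vector_derivative 1 / (sqrt a * (p + a))) (at a)"
      using der by (simp add: has_real_derivative_iff_has_vector_derivative)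
  qed
  have F0: "F 0 = 0" unfolding F_def by simp
  show ?thesis
  proof (rule has_integral_to_inf)
    show "(\<lambda>a. 1 / (sqrt a * (p + a))) integrable_on {0..y}" for y
    proof (cases "y \<ge> 0")
      case True then show ?thesis using int by blast
    next
      case False then show ?thesis by (simp add: integrable_on_empty)
    qed
    show "0 \<le> 1 / (sqrt y * (p + y))" if "0 \<le> y" for y using that p by simp
    have "\<forall>\<^sub>F y in at_top. integral {0..y} (\<lambda>a. 1 / (sqrt a * (p + a))) = F y"
      using int F0 by (intro eventually_at_top_linorderI[of 0]) (simp add: integral_unique)
    moreover have "(F \<longlongrightarrow> pi / sqrt p) at_top"
    proof -
      have "filterlim (\<lambda>y. sqrt y / sqrt p) at_top at_top" using p by real_asymp
      hence "((\<lambda>y. arctan (sqrt y / sqrt p)) \<longlongrightarrow> pi / 2) at_top"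
        by (rule filterlim_compose[OF tendsto_arctan_at_top])
      hence "((\<lambda>y. 2 / sqrt p * arctan (sqrt y / sqrt p)) \<longlongrightarrow> 2 / sqrt p * (pi / 2)) at_top"
        by (intro tendsto_intros)
      thus ?thesis unfolding F_def by simp
    qed
    ultimately show "((\<lambda>y. integral {0..y} (\<lambda>a. 1 / (sqrt a * (p + a)))) \<longlongrightarrow> pi / sqrt p) at_top"
      by (simp add: filterlim_cong)
  qed
qed


lemma int_sq_res:
  fixes m :: real
  assumes m: "m > 0"
  shows "((\<lambda>z. 1 / (m + z)^2) has_integral 1 / m) {0..}"
proof -
  define F where "F z = - 1 / (m + z)" for z
  have int: "((\<lambda>z. 1 / (m + z)^2) has_integral F y - F 0) {0..y}" if "y \<ge> 0" for y
  proof (rule fundamental_theorem_of_calculus[OF that])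
    fix a assume a: "a \<in> {0..y}"
    hence "m + a > 0" using m by simp
    hence "(F has_real_derivative 1 / (m + a)^2) (at a)"
      unfolding F_def by (auto intro!: derivative_eq_intros simp: power2_eq_square field_simps)
    thus "(F has_vector_derivative 1 / (m + a)^2) (at a within {0..y})"
      by (simp add: has_real_derivative_iff_has_vector_derivative has_vector_derivative_at_within)
  qed
  show ?thesis
  proof (rule has_integral_to_inf)
    show "(\<lambda>z. 1 / (m + z)^2) integrable_on {0..y}" for y
    proof (cases "y \<ge> 0")
      case True then show ?thesis using int by blast
    next
      case False then show ?thesis by (simp add: integrable_on_empty)
    qed
    show "0 \<le> 1 / (m + y)^2" if "0 \<le> y" for y using that m by simp
    have "\<forall>\<^sub>F y in at_top. integral {0..y} (\<lambda>z. 1 / (m + z)^2) = F y - F 0"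
      using int by (intro eventually_at_top_linorderI[of 0]) (simp add: integral_unique)
    moreover have "((\<lambda>y. F y - F 0) \<longlongrightarrow> 1 / m) at_top"
      unfolding F_def using m by real_asymp
    ultimately show "((\<lambda>y. integral {0..y} (\<lambda>z. 1 / (m + z)^2)) \<longlongrightarrow> 1 / m) at_top"
      by (simp add: filterlim_cong)
  qed
qed

lemma int_prod_integrable:
  fixes p q :: real
  assumes p: "p > 0" and q: "q > 0"
  shows "(\<lambda>z. 1 / ((p + z) * (q + z))) integrable_on {0..}"
proof (rule measurable_bounded_by_integrable_imp_integrable)
  define m where "m = min p q"
  have m: "m > 0" using p q unfolding m_def by simp
  show "(\<lambda>z. 1 / (m + z)^2) integrable_on {0..}" using int_sq_res[OF m] by blast
  show "(\<lambda>z. 1 / ((p + z) * (q + z))) \<in> borel_measurable (lebesgue_on {0..})"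
    using p q by (intro continuous_imp_measurable_on_sets_lebesgue continuous_intros) auto
  show "{0::real..} \<in> sets lebesgue" by simp
  fix z :: real assume z: "z \<in> {0..}"
  have "m + z \<le> p + z" "m + z \<le> q + z" "m + z > 0" using z m unfolding m_def by auto
  hence "(m + z)^2 \<le> (p + z) * (q + z)" by (simp add: power2_eq_square mult_mono)
  thus "norm (1 / ((p + z) * (q + z))) \<le> 1 / (m + z)^2"
    using \<open>m + z > 0\<close> z p q by (simp add: divide_simps)
qed


lemma powr_mhalf: "(x::real) \<ge> 0 \<Longrightarrow> x powr (-(1/2)) = 1 / sqrt x"
proof -
  assume x: "x \<ge> 0"
  have "x powr (-(1/2)) = inverse (x powr (1/2))" by (rule powr_minus)
  also have "x powr (1/2) = sqrt x" using x by (rule powr_half_sqrt)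
  finally show ?thesis by (simp add: inverse_eq_divide)
qed

lemma int_inv_sqrt_0:
  fixes c :: real
  assumes c: "c \<ge> 0"
  shows "((\<lambda>a. 1 / sqrt a) has_integral 2 * sqrt c) {0..c}"
proof -
  have h: "((\<lambda>x. x powr (-(1/2))) has_integral (c powr (-(1/2) + 1) / (-(1/2) + 1))) {0..c}"
    using c by (intro has_integral_powr_from_0) auto
  have e1: "-(1/2) + 1 = (1/2::real)" by simp
  have "c powr (-(1/2) + 1) / (-(1/2) + 1) = 2 * sqrt c"
    unfolding e1 using c by (simp add: powr_half_sqrt)
  moreover have "((\<lambda>x. x powr (-(1/2))) has_integral (c powr (-(1/2) + 1) / (-(1/2) + 1))) {0..c}
      \<longleftrightarrow> ((\<lambda>a. 1 / sqrt a) has_integral (c powr (-(1/2) + 1) / (-(1/2) + 1))) {0..c}"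
    by (rule has_integral_cong) (simp add: powr_mhalf)
  ultimately show ?thesis using h by (simp add: mult.commute)
qed

lemma int_inv_sqrt3_inf:
  fixes C :: real
  assumes C: "C > 0"
  shows "((\<lambda>a. 1 / (a * sqrt a)) has_integral 2 / sqrt C) {C..}"
proof -
  have h: "((\<lambda>x. x powr (-(3/2))) has_integral -(C powr (-(3/2) + 1)) / (-(3/2) + 1)) {C..}"
    using C by (intro has_integral_powr_to_inf) auto
  have e1: "-(3/2) + 1 = -(1/2::real)" by simp
  have "-(C powr (-(3/2) + 1)) / (-(3/2) + 1) = 2 * C powr (-(1/2))"
    unfolding e1 by simp
  also have "\<dots> = 2 / sqrt C" using C by (simp add: powr_mhalf)
  finally have v: "-(C powr (-(3/2) + 1)) / (-(3/2) + 1) = 2 / sqrt C" .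
  have pt: "x powr (-(3/2)) = 1 / (x * sqrt x)" if "x \<in> {C..}" for x
  proof -
    have x: "x > 0" using that C by simp
    have e2: "-(3/2) = -(1/2) + (-1::real)" by simp
    have "x powr (-(3/2)) = x powr (-(1/2)) * x powr (-1)" unfolding e2 by (rule powr_add)
    also have "x powr (-1) = 1 / x" using x by (simp add: powr_minus inverse_eq_divide)
    finally show ?thesis using x by (simp add: powr_mhalf)
  qed
  have "((\<lambda>x. x powr (-(3/2))) has_integral 2 / sqrt C) {C..} \<longleftrightarrow> ((\<lambda>a. 1 / (a * sqrt a)) has_integral 2 / sqrt C) {C..}"
    by (rule has_integral_cong) (simp add: pt)
  thus ?thesis using h v by simp
qed

lemma int_inv:
  fixes c C :: real
  assumes c: "c > 0" and cC: "c \<le> C"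
  shows "((\<lambda>a. 1 / a) has_integral ln C - ln c) {c..C}"
proof (rule fundamental_theorem_of_calculus[OF cC])
  fix a assume "a \<in> {c..C}"
  hence a: "a > 0" using c by simp
  hence "(ln has_real_derivative 1 / a) (at a)" by (auto intro!: derivative_eq_intros)
  thus "(ln has_vector_derivative 1 / a) (at a within {c..C})"
    by (simp add: has_real_derivative_iff_has_vector_derivative has_vector_derivative_at_within)
qed

lemma matrix_add_rdistrib':
  fixes A B :: "real^'n^'m" and C :: "real^'p^'n"
  shows "(A + B) ** C = A ** C + B ** C"
  by (simp add: vec_eq_iff matrix_matrix_mult_def sum.distrib ring_distribs)

lemma sum_mm_left:
  fixes M :: "'k \<Rightarrow> real^'n^'m" and B :: "real^'p^'n"
  shows "(\<Sum>k\<in>S. M k) ** B = (\<Sum>k\<in>S. M k ** B)"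
proof (cases "finite S")
  case True then show ?thesis
    by (induction S rule: finite_induct) (auto simp: matrix_add_rdistrib')
qed simp

lemma sum_mm_right:
  fixes M :: "'k \<Rightarrow> real^'p^'n" and B :: "real^'n^'m"
  shows "B ** (\<Sum>k\<in>S. M k) = (\<Sum>k\<in>S. B ** M k)"
proof (cases "finite S")
  case True then show ?thesis
    by (induction S rule: finite_induct) (auto simp: matrix_add_ldistrib)
qed simp

lemma fX_sandwich:
  "fX u f ** A ** fX u g = (\<Sum>k\<in>UNIV. \<Sum>l\<in>UNIV. (f k * g l) *\<^sub>R (outer (u k) ** A ** outer (u l)))"
  unfolding fX_def sum_mm_left sum_mm_right
  by (simp add: matrix_scalar_ac scalar_matrix_assoc[symmetric] mult.commute) (rule sum.swap)

lemma linear_quadform: "linear (\<lambda>M::real^'n^'n. v \<bullet> (M *v v))"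
  by (rule linearI) (simp_all add: matrix_vector_mult_add_rdistrib inner_add_right
      scaleR_matrix_vector_assoc[symmetric])

lemma linear_transpose: "linear (transpose :: real^'n^'m \<Rightarrow> real^'m^'n)"
  by (rule linearI) (simp_all add: transpose_def vec_eq_iff)

definition rho :: "('n \<Rightarrow> real) \<Rightarrow> real \<Rightarrow> 'n \<Rightarrow> real" where
  "rho x z k = 1 / (x k + z)"

lemma inv_rho:
  assumes "pd X" "eigsys X u x" "z \<ge> 0"
  shows "matrix_inv (X + z *\<^sub>R mat 1) = fX u (rho x z)"
proof -
  have "x k + z \<noteq> 0" for k using eig_pos[OF assms(1,2), of k] assms(3) by simp
  thus ?thesis unfolding rho_def by (intro inv_shift[OF assms(2)])
qed

lemma dlog_has_integral:
  assumes "pd X" "eigsys X u x"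
  shows "((\<lambda>z. fX u (rho x z) ** A ** fX u (rho x z)) has_integral dlog X A) {0..}"
proof -
  have xp: "x k > 0" for k by (rule eig_pos[OF assms])
  let ?M = "\<lambda>k l. outer (u k) ** A ** outer (u l)"
  let ?L = "\<lambda>k l. integral {0..} (\<lambda>z. 1 / ((x k + z) * (x l + z)))"
  have "((\<lambda>z. \<Sum>k\<in>UNIV. \<Sum>l\<in>UNIV. (rho x z k * rho x z l) *\<^sub>R ?M k l) has_integral
        (\<Sum>k\<in>UNIV. \<Sum>l\<in>UNIV. ?L k l *\<^sub>R ?M k l)) {0..}"
  proof (intro has_integral_sum has_integral_scaleR_left, simp, simp)
    fix k l
    have "(\<lambda>z. 1 / ((x k + z) * (x l + z))) integrable_on {0..}"
      by (rule int_prod_integrable[OF xp xp])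
    hence "((\<lambda>z. 1 / ((x k + z) * (x l + z))) has_integral ?L k l) {0..}"
      by (rule integrable_integral)
    thus "((\<lambda>z. rho x z k * rho x z l) has_integral ?L k l) {0..}"
      unfolding rho_def by simp
  qed
  hence hi: "((\<lambda>z. fX u (rho x z) ** A ** fX u (rho x z)) has_integral
        (\<Sum>k\<in>UNIV. \<Sum>l\<in>UNIV. ?L k l *\<^sub>R ?M k l)) {0..}"
    by (simp add: fX_sandwich)
  have "dlog X A = integral {0..} (\<lambda>z. fX u (rho x z) ** A ** fX u (rho x z))"
    unfolding dlog_def by (intro integral_cong) (simp add: inv_rho[OF assms])
  also have "\<dots> = (\<Sum>k\<in>UNIV. \<Sum>l\<in>UNIV. ?L k l *\<^sub>R ?M k l)" using hi by (rule integral_unique)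
  finally show ?thesis using hi by simp
qed

lemma dlog_quad:
  fixes X A :: "real^'n^'n" and v :: "real^'n"
  assumes "pd X" "eigsys X u x"
  shows "((\<lambda>z. (fX u (rho x z) *v v) \<bullet> (A *v (fX u (rho x z) *v v))) has_integral v \<bullet> (dlog X A *v v)) {0..}"
proof -
  have bl: "bounded_linear (\<lambda>M::real^'n^'n. v \<bullet> (M *v v))"
    using linear_quadform linear_conv_bounded_linear by blast
  have "((\<lambda>z. v \<bullet> ((fX u (rho x z) ** A ** fX u (rho x z)) *v v)) has_integral v \<bullet> (dlog X A *v v)) {0..}"
    using has_integral_linear[OF dlog_has_integral[OF assms] bl] by (simp add: o_def)
  moreover have "v \<bullet> ((fX u f ** A ** fX u f) *v v) = (fX u f *v v) \<bullet> (A *v (fX u f *v v))" for f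
  proof -
    have "v \<bullet> ((fX u f ** A ** fX u f) *v v) = v \<bullet> (fX u f *v (A *v (fX u f *v v)))"
      by (simp add: matrix_vector_mul_assoc matrix_mul_assoc)
    also have "\<dots> = (fX u f *v v) \<bullet> (A *v (fX u f *v v))"
      using sym_inner[OF fX_sym, of u f v "A *v (fX u f *v v)"] by simp
    finally show ?thesis .
  qed
  ultimately show ?thesis by simp
qed

lemma dlog_sym:
  assumes "pd X" "eigsys X u x" "psd A"
  shows "transpose (dlog X A) = dlog X A"
proof -
  have bl: "bounded_linear (transpose :: real^'n^'n \<Rightarrow> real^'n^'n)"
    using linear_transpose linear_conv_bounded_linear by blast
  note hi = dlog_has_integral[OF assms(1,2), of A]
  have "transpose (dlog X A) = transpose (integral {0..} (\<lambda>z. fX u (rho x z) ** A ** fX u (rho x z)))"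
    using hi by (simp add: integral_unique)
  also have "\<dots> = integral {0..} (transpose \<circ> (\<lambda>z. fX u (rho x z) ** A ** fX u (rho x z)))"
    using hi bl by (intro integral_linear[symmetric]) auto
  also have "\<dots> = integral {0..} (\<lambda>z. fX u (rho x z) ** A ** fX u (rho x z))"
    by (simp add: o_def matrix_transpose_mul fX_sym psd_sym[OF assms(3)] matrix_mul_assoc)
  also have "\<dots> = dlog X A" using hi by (simp add: integral_unique)
  finally show ?thesis .
qed

lemma psd_amgm:
  fixes A :: "real^'n^'n"
  assumes A: "psd A" and t: "t > 0"
  shows "2 * (y \<bullet> (A *v z)) \<le> t * (y \<bullet> (A *v y)) + (z \<bullet> (A *v z)) / t"
proof -
  have sA: "transpose A = A" using A by (rule psd_sym)
  have zy: "z \<bullet> (A *v y) = y \<bullet> (A *v z)"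
    using sym_inner[OF sA, of y z] by (simp add: inner_commute)
  have "0 \<le> (t *\<^sub>R y - z) \<bullet> (A *v (t *\<^sub>R y - z))" using A unfolding psd_def by blast
  also have "\<dots> = t * t * (y \<bullet> (A *v y)) - t * (y \<bullet> (A *v z)) - t * (z \<bullet> (A *v y)) + z \<bullet> (A *v z)"
    by (simp add: matrix_vector_mult_diff_distrib matrix_vector_mult_scaleR inner_diff_left inner_diff_right algebra_simps)
  finally have "2 * t * (y \<bullet> (A *v z)) \<le> t * t * (y \<bullet> (A *v y)) + z \<bullet> (A *v z)" using zy by simp
  hence "2 * (y \<bullet> (A *v z)) * t \<le> (t * (y \<bullet> (A *v y)) + (z \<bullet> (A *v z)) / t) * t"
    using t by (simp add: algebra_simps)
  thus ?thesis using t by simp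
qed

lemma P_bound:
  assumes on: "onb u" and f: "\<And>k. 0 \<le> f k" "\<And>k. f k \<le> B"
  shows "(fX u f *v v) \<bullet> (fX u f *v v) \<le> B^2 * (v \<bullet> v)"
proof -
  have "(fX u f *v v) \<bullet> (fX u f *v v) = (\<Sum>k\<in>UNIV. (f k)^2 * (u k \<bullet> v)^2)" by (rule fX_norm2[OF on])
  also have "\<dots> \<le> (\<Sum>k\<in>UNIV. B^2 * (u k \<bullet> v)^2)"
    using f by (intro sum_mono mult_right_mono power_mono) auto
  also have "\<dots> = B^2 * (v \<bullet> v)" by (simp add: parseval[OF on] sum_distrib_left)
  finally show ?thesis .
qed

lemma G_bound:
  assumes on: "onb u" and A: "psd A" and f: "\<And>k. 0 \<le> f k" "\<And>k. f k \<le> B"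
  shows "(fX u f *v v) \<bullet> (A *v (fX u f *v v)) \<le> trace A * (B^2 * (v \<bullet> v))"
proof -
  have "(fX u f *v v) \<bullet> (A *v (fX u f *v v)) \<le> trace A * ((fX u f *v v) \<bullet> (fX u f *v v))"
    by (rule psd_trace_bound(1)[OF A])
  also have "\<dots> \<le> trace A * (B^2 * (v \<bullet> v))"
    by (intro mult_left_mono P_bound[OF on f] psd_trace_bound(2)[OF A])
  finally show ?thesis .
qed

lemma G_expand:
  "(fX u f *v v) \<bullet> y = (\<Sum>k\<in>UNIV. f k * ((u k \<bullet> v) * (u k \<bullet> y)))"
  by (simp add: fX_mv inner_sum_left mult.assoc)

lemma lin_aux:
  fixes Q a1 b1 c1 X1 X2 X3 :: real
  shows "Q \<le> a1 + b1 + c1 \<Longrightarrow> a1 = X1 + Q / 6 \<Longrightarrow> b1 \<le> X2 + Q / 6 \<Longrightarrow> c1 = X3 + Q / 6 \<Longrightarrow>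
    Q \<le> Q / 2 + (X1 + X3 + X2)"
  by linarith

lemma lin_aux2:
  fixes Q Y :: real
  shows "Q \<le> Q / 2 + Y \<Longrightarrow> Q / 2 \<le> Y"
  by linarith

lemma core:
  fixes X A :: "real^'n^'n" and v :: "real^'n" and c C m :: real
  assumes X: "pd X" and A: "psd A" and es: "eigsys X u x" and c: "0 < c" and cC: "c \<le> C"
    and m: "m > 0" "\<And>k. m \<le> x k"
  shows "(fX u (\<lambda>k. 1 / sqrt (x k)) *v v) \<bullet> (A *v (fX u (\<lambda>k. 1 / sqrt (x k)) *v v))
     \<le> 3 * (ln C - ln c) / pi\<^sup>2 * (v \<bullet> (dlog X A *v v))
        + (12 * c / (pi\<^sup>2 * m\<^sup>2) + 12 / (pi\<^sup>2 * C)) * (trace A * (v \<bullet> v))"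
proof -
  have C: "C > 0" using c cC by simp
  have on: "onb u" using es by (rule eigsys_onb)
  have xp: "\<And>k. x k > 0" by (rule eig_pos[OF X es])
  define P where "P f = fX u f *v v" for f
  define G where "G f g = P f \<bullet> (A *v P g)" for f g
  define s where "s = (\<lambda>k. 1 / sqrt (x k))"
  define Msq where "Msq = G s s"
  define K2 where "K2 = trace A * (v \<bullet> v)"
  define D where "D = v \<bullet> (dlog X A *v v)"
  define ell where "ell = ln C - ln c"
  have ell: "ell \<ge> 0" unfolding ell_def using c cC by simp
  have Gnn: "G f f \<ge> 0" for f using A unfolding G_def psd_def by blast
  have Msq: "Msq \<ge> 0" unfolding Msq_def by (rule Gnn)
  have K2: "K2 \<ge> 0" unfolding K2_def using psd_trace_bound(2)[OF A] by simp
  have amgm: "2 * G f g \<le> t * G f f + G g g / t" if "t > 0" for f g t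
    unfolding G_def by (rule psd_amgm[OF A that])
  have Dint: "((\<lambda>z. G (rho x z) (rho x z)) has_integral D) {0..}"
    unfolding G_def P_def D_def by (rule dlog_quad[OF X es])
  have rho_nn: "0 \<le> rho x a k" if "a \<ge> 0" for a k using xp[of k] that unfolding rho_def by simp
  have rho_m: "rho x a k \<le> 1 / m" if "a \<ge> 0" for a k
    using xp[of k] that m unfolding rho_def by (intro divide_left_mono) (auto intro: add_increasing2)
  have rho_a: "rho x a k \<le> 1 / a" if "a > 0" for a k
    using xp[of k] that unfolding rho_def by (intro divide_left_mono) auto
  have Gm: "G (rho x a) (rho x a) \<le> K2 / m^2" if "a \<ge> 0" for a
  proof -
    have "G (rho x a) (rho x a) \<le> trace A * ((1/m)^2 * (v \<bullet> v))"
      unfolding G_def P_def using rho_nn rho_m that by (intro G_bound[OF on A]) auto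
    thus ?thesis unfolding K2_def by (simp add: power_divide)
  qed
  have Ga: "G (rho x a) (rho x a) \<le> K2 / a^2" if "a > 0" for a
  proof -
    have "G (rho x a) (rho x a) \<le> trace A * ((1/a)^2 * (v \<bullet> v))"
      unfolding G_def P_def using rho_nn rho_a that by (intro G_bound[OF on A]) auto
    thus ?thesis unfolding K2_def by (simp add: power_divide)
  qed
  define \<gamma> where "\<gamma> k = (u k \<bullet> v) * (u k \<bullet> (A *v P s))" for k
  have Gexp: "G f s = (\<Sum>k\<in>UNIV. f k * \<gamma> k)" for f
    unfolding G_def P_def \<gamma>_def by (rule G_expand)
  define \<phi> where "\<phi> a = (1 / sqrt a) * G (rho x a) s" for a
  have \<phi>int: "(\<phi> has_integral pi * Msq) {0..}"
  proof -
    have "((\<lambda>a. \<Sum>k\<in>UNIV. \<gamma> k * (1 / (sqrt a * (x k + a)))) has_integral (\<Sum>k\<in>UNIV. \<gamma> k * (pi / sqrt (x k)))) {0..}"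
      by (intro has_integral_sum finite_class.finite_UNIV has_integral_mult_right int_sqrt_res xp)
    moreover have "\<phi> = (\<lambda>a. \<Sum>k\<in>UNIV. \<gamma> k * (1 / (sqrt a * (x k + a))))"
      unfolding \<phi>_def Gexp rho_def by (rule ext) (simp add: sum_distrib_left mult.commute)
    moreover have "(\<Sum>k\<in>UNIV. \<gamma> k * (pi / sqrt (x k))) = pi * Msq"
      unfolding Msq_def Gexp unfolding s_def by (simp add: sum_distrib_left mult.commute)
    ultimately show ?thesis by simp
  qed
  define t1 where "t1 = 6 * sqrt c / pi"
  define t3 where "t3 = 6 / (pi * sqrt C)"
  define t2 where "t2 = (if ell > 0 then 3 * ell / pi else 1)"
  have t1: "t1 > 0" unfolding t1_def using c by simp
  have t3: "t3 > 0" unfolding t3_def using C by simp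
  have t2: "t2 > 0" unfolding t2_def using ell by simp
  define c1 where "c1 = (t1 * (K2 / m^2) + Msq / t1) / 2"
  define c3 where "c3 = (t3 * K2 + Msq / t3) / 2"
  have c1: "c1 \<ge> 0" unfolding c1_def using t1 K2 Msq m by simp
  have c3: "c3 \<ge> 0" unfolding c3_def using t3 K2 Msq by simp
  define g where "g a = G (rho x a) (rho x a)" for a
  have gint: "g integrable_on {c..C}"
    using Dint unfolding g_def by (intro integrable_on_subinterval[of _ "{0..}"]) (auto simp: c less_imp_le)
  define Dm where "Dm = integral {c..C} g"
  have Dmi: "(g has_integral Dm) {c..C}" unfolding Dm_def using gint by (rule integrable_integral)
  have DmD: "Dm \<le> D"
    using Dmi Dint c unfolding g_def by (intro has_integral_subset_le[of "{c..C}" "{0..}"]) (auto simp: Gnn)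
  have Dm0: "Dm \<ge> 0" using Dmi by (rule has_integral_nonneg) (simp add: g_def Gnn)
  define h1 where "h1 a = (1 / sqrt a) * c1" for a
  define h2 where "h2 a = t2 / 2 * g a + Msq / (2 * t2) * (1 / a)" for a
  define h3 where "h3 a = (1 / (a * sqrt a)) * c3" for a
  define H where "H a = (if a \<in> {0..c} then h1 a else 0) + (if a \<in> {c..C} then h2 a else 0)
      + (if a \<in> {C..} then h3 a else 0)" for a
  have I1: "(h1 has_integral (2 * sqrt c) * c1) {0..c}"
    unfolding h1_def by (rule has_integral_mult_left[OF int_inv_sqrt_0]) (use c in simp)
  have I2: "(h2 has_integral t2 / 2 * Dm + Msq / (2 * t2) * ell) {c..C}"
    unfolding h2_def ell_def
    by (intro has_integral_add has_integral_mult_right Dmi int_inv c cC)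
  have I3: "(h3 has_integral (2 / sqrt C) * c3) {C..}"
    unfolding h3_def by (rule has_integral_mult_left[OF int_inv_sqrt3_inf[OF C]])
  have Hint: "(H has_integral (2 * sqrt c) * c1 + (t2 / 2 * Dm + Msq / (2 * t2) * ell) + (2 / sqrt C) * c3) {0..}"
    unfolding H_def
  proof (intro has_integral_add)
    show "((\<lambda>a. if a \<in> {0..c} then h1 a else 0) has_integral (2 * sqrt c) * c1) {0..}"
      using I1 by (subst has_integral_restrict) auto
    show "((\<lambda>a. if a \<in> {c..C} then h2 a else 0) has_integral t2 / 2 * Dm + Msq / (2 * t2) * ell) {0..}"
      using I2 c by (subst has_integral_restrict) auto
    show "((\<lambda>a. if a \<in> {C..} then h3 a else 0) has_integral (2 / sqrt C) * c3) {0..}"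
      using I3 C by (subst has_integral_restrict) auto
  qed
  have pt: "\<phi> a \<le> H a" if a: "a \<in> {0..}" for a
  proof -
    have a0: "a \<ge> 0" using a by simp
    have h1nn: "0 \<le> (if a \<in> {0..c} then h1 a else 0)" unfolding h1_def using c1 by simp
    have h2nn: "0 \<le> (if a \<in> {c..C} then h2 a else 0)" unfolding h2_def g_def using t2 Msq Gnn c
      by (auto intro!: add_nonneg_nonneg mult_nonneg_nonneg)
    have h3nn: "0 \<le> (if a \<in> {C..} then h3 a else 0)" unfolding h3_def using c3 a0 by (auto intro!: divide_nonneg_nonneg)
    consider "a \<le> c" | "c < a" "a \<le> C" | "C < a" by linarith
    thus ?thesis
    proof cases
      case 1
      have "2 * G (rho x a) s \<le> t1 * G (rho x a) (rho x a) + G s s / t1" by (rule amgm[OF t1])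
      also have "\<dots> \<le> t1 * (K2 / m^2) + Msq / t1" unfolding Msq_def
        using Gm[OF a0] t1 by (intro add_mono mult_left_mono) auto
      finally have "G (rho x a) s \<le> c1" unfolding c1_def by simp
      hence "\<phi> a \<le> h1 a" unfolding \<phi>_def h1_def using a0 by (intro mult_left_mono) auto
      moreover have "h1 a = (if a \<in> {0..c} then h1 a else 0)" using 1 a0 by simp
      ultimately show ?thesis unfolding H_def using h2nn h3nn by linarith
    next
      case 2
      have ap: "a > 0" using 2 c by simp
      let ?z = "(1 / sqrt a) *\<^sub>R P s"
      have ineq: "2 * (P (rho x a) \<bullet> (A *v ?z)) \<le> t2 * (P (rho x a) \<bullet> (A *v P (rho x a))) + (?z \<bullet> (A *v ?z)) / t2"
        by (rule psd_amgm[OF A t2])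
      have e1: "P (rho x a) \<bullet> (A *v ?z) = \<phi> a"
        unfolding \<phi>_def G_def by (simp add: matrix_vector_mult_scaleR)
      have e2: "?z \<bullet> (A *v ?z) = Msq / a"
      proof -
        have "?z \<bullet> (A *v ?z) = (1 / sqrt a) * (1 / sqrt a) * Msq"
          unfolding Msq_def G_def by (simp add: matrix_vector_mult_scaleR)
        also have "(1 / sqrt a) * (1 / sqrt a) = 1 / a" using ap by (simp add: divide_simps)
        finally show ?thesis by simp
      qed
      have "2 * \<phi> a \<le> t2 * g a + Msq / a / t2"
        using ineq unfolding e1 e2 unfolding g_def G_def .
      hence "\<phi> a \<le> h2 a" unfolding h2_def using t2 ap by (simp add: field_simps)
      moreover have "h2 a = (if a \<in> {c..C} then h2 a else 0)" using 2 by simp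
      ultimately show ?thesis unfolding H_def using h1nn h3nn by linarith
    next
      case 3
      have ap: "a > 0" using 3 C by simp
      have ta: "t3 * a > 0" using t3 ap by simp
      have "2 * G (rho x a) s \<le> (t3 * a) * G (rho x a) (rho x a) + G s s / (t3 * a)" by (rule amgm[OF ta])
      also have "\<dots> \<le> (t3 * a) * (K2 / a^2) + Msq / (t3 * a)" unfolding Msq_def
        using Ga[OF ap] ta by (intro add_mono mult_left_mono) auto
      also have "\<dots> = 2 * (c3 / a)" unfolding c3_def using ap t3 by (simp add: field_simps power2_eq_square)
      finally have "G (rho x a) s \<le> c3 / a" by simp
      hence "\<phi> a \<le> (1 / sqrt a) * (c3 / a)" unfolding \<phi>_def using ap by (intro mult_left_mono) auto
      also have "\<dots> = h3 a" unfolding h3_def by simp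
      finally have "\<phi> a \<le> h3 a" .
      moreover have "h3 a = (if a \<in> {C..} then h3 a else 0)" using 3 by simp
      ultimately show ?thesis unfolding H_def using h1nn h2nn by linarith
    qed
  qed
  have main: "pi * Msq \<le> (2 * sqrt c) * c1 + (t2 / 2 * Dm + Msq / (2 * t2) * ell) + (2 / sqrt C) * c3"
    by (rule has_integral_le[OF \<phi>int Hint pt])
  have pi: "pi > 0" by (rule pi_gt_zero)
  have sc: "sqrt c * sqrt c = c" using c by simp
  have sC: "sqrt C * sqrt C = C" using C by simp
  have sc0: "sqrt c > 0" using c by simp
  have sC0: "sqrt C > 0" using C by simp
  have A1: "(2 * sqrt c) * c1 = 6 * c * K2 / (pi * m^2) + pi * Msq / 6"
  proof -
    have "(2 * sqrt c) * c1 = (sqrt c * t1) * (K2 / m^2) + Msq * (sqrt c / t1)"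
      unfolding c1_def using t1 by (simp add: field_simps)
    also have "sqrt c * t1 = 6 * c / pi" unfolding t1_def using sc by (simp add: field_simps)
    also have "sqrt c / t1 = pi / 6" unfolding t1_def using sc0 pi by (simp add: field_simps)
    finally show ?thesis by (simp add: field_simps)
  qed
  have A3: "(2 / sqrt C) * c3 = 6 * K2 / (pi * C) + pi * Msq / 6"
  proof -
    have "(2 / sqrt C) * c3 = (t3 / sqrt C) * K2 + Msq * (1 / (t3 * sqrt C))"
      unfolding c3_def using t3 sC0 by (simp add: field_simps)
    also have "t3 / sqrt C = 6 / (pi * C)" unfolding t3_def using sC sC0 pi by (simp add: field_simps)
    also have "1 / (t3 * sqrt C) = pi / 6" unfolding t3_def using sC0 pi by (simp add: field_simps)
    finally show ?thesis by (simp add: field_simps)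
  qed
  have A2: "t2 / 2 * Dm + Msq / (2 * t2) * ell \<le> 3 * ell * Dm / (2 * pi) + pi * Msq / 6"
  proof (cases "ell > 0")
    case True
    hence t2e: "t2 = 3 * ell / pi" unfolding t2_def by simp
    have "t2 / 2 * Dm + Msq / (2 * t2) * ell = 3 * ell * Dm / (2 * pi) + pi * Msq / 6"
      unfolding t2e using True pi by (simp add: field_simps)
    thus ?thesis by simp
  next
    case False
    hence "ell = 0" using ell by simp
    hence "ln C = ln c" unfolding ell_def by simp
    hence "C = c" using c C by simp
    hence "Dm = 0" unfolding Dm_def by simp
    thus ?thesis using \<open>ell = 0\<close> Msq pi by simp
  qed
  have "pi * Msq \<le> pi * Msq / 2 + (6 * c * K2 / (pi * m^2) + 6 * K2 / (pi * C) + 3 * ell * Dm / (2 * pi))"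
    using lin_aux[OF main A1 A2 A3] .
  hence Y: "pi * Msq / 2 \<le> 6 * c * K2 / (pi * m^2) + 6 * K2 / (pi * C) + 3 * ell * Dm / (2 * pi)"
    by (rule lin_aux2)
  have "Msq = (2 / pi) * (pi * Msq / 2)" using pi by simp
  also have "\<dots> \<le> (2 / pi) * (6 * c * K2 / (pi * m^2) + 6 * K2 / (pi * C) + 3 * ell * Dm / (2 * pi))"
    using Y pi by (intro mult_left_mono) auto
  also have "\<dots> = 3 * ell / pi^2 * Dm + (12 * c / (pi^2 * m^2) + 12 / (pi^2 * C)) * K2"
    using pi by (simp add: field_simps power2_eq_square)
  also have "\<dots> \<le> 3 * ell / pi^2 * D + (12 * c / (pi^2 * m^2) + 12 / (pi^2 * C)) * K2"
    using DmD ell by (intro add_right_mono mult_left_mono) auto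
  finally show ?thesis unfolding Msq_def G_def P_def s_def ell_def D_def K2_def .
qed

lemma transpose_add': "transpose (A + B :: real^'n^'n) = transpose A + transpose B"
  by (simp add: vec_eq_iff transpose_def)

theorem lemmaB1:
  fixes X A :: "real^'n^'n" and c C :: real
  assumes "pd X" and "psd A" and "0 < c" and "c \<le> C"
  shows "loewner_le (inv_sqrt X ** A ** inv_sqrt X)
           ((3 * (ln C - ln c) / pi\<^sup>2) *\<^sub>R dlog X A
            + ((12 * c * real CARD('n) / (pi\<^sup>2 * (lambda_min X)\<^sup>2)
                + 12 * real CARD('n) / (pi\<^sup>2 * C)) * trace A) *\<^sub>R mat 1)"
proof -
  note X = assms(1) and A = assms(2) and c = assms(3) and cC = assms(4)
  have C: "C > 0" using c cC by simp
  obtain u x where es: "eigsys X u x" using spectral[OF pd_sym[OF X]] by blast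
  have on: "onb u" using es by (rule eigsys_onb)
  have xp: "\<And>k. x k > 0" by (rule eig_pos[OF X es])
  define m where "m = lambda_min X"
  have m: "m > 0" "\<And>k. m \<le> x k" using lambda_min_props[OF X es] unfolding m_def by auto
  define d where "d = real CARD('n)"
  have d: "d \<ge> 1" unfolding d_def by simp
  define ell where "ell = ln C - ln c"
  have ell: "ell \<ge> 0" unfolding ell_def using c cC by simp
  define \<alpha> where "\<alpha> = 3 * (ln C - ln c) / pi\<^sup>2"
  define \<beta> where "\<beta> = (12 * c * real CARD('n) / (pi\<^sup>2 * (lambda_min X)\<^sup>2)
                + 12 * real CARD('n) / (pi\<^sup>2 * C)) * trace A"
  define S where "S = fX u (\<lambda>k. 1 / sqrt (x k))"
  have S: "inv_sqrt X = S" unfolding S_def by (rule inv_sqrt_fX[OF X es])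
  have sS: "transpose S = S" unfolding S_def by (rule fX_sym)
  have sA: "transpose A = A" by (rule psd_sym[OF A])
  have trA: "trace A \<ge> 0" by (rule psd_trace_bound(2)[OF A])
  have quad: "v \<bullet> (S ** A ** S *v v) \<le> \<alpha> * (v \<bullet> (dlog X A *v v)) + \<beta> * (v \<bullet> v)" for v
  proof -
    have "v \<bullet> (S ** A ** S *v v) = v \<bullet> (S *v (A *v (S *v v)))"
      by (simp add: matrix_vector_mul_assoc matrix_mul_assoc)
    also have "\<dots> = (S *v v) \<bullet> (A *v (S *v v))"
      using sym_inner[OF sS, of v "A *v (S *v v)"] by simp
    also have "\<dots> \<le> 3 * (ln C - ln c) / pi\<^sup>2 * (v \<bullet> (dlog X A *v v))
        + (12 * c / (pi\<^sup>2 * m\<^sup>2) + 12 / (pi\<^sup>2 * C)) * (trace A * (v \<bullet> v))"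
      unfolding S_def by (rule core[OF X A es c cC m])
    also have "(12 * c / (pi\<^sup>2 * m\<^sup>2) + 12 / (pi\<^sup>2 * C)) * (trace A * (v \<bullet> v))
        \<le> (12 * c / (pi\<^sup>2 * m\<^sup>2) + 12 / (pi\<^sup>2 * C)) * d * (trace A * (v \<bullet> v))"
    proof -
      have "0 \<le> (12 * c / (pi\<^sup>2 * m\<^sup>2) + 12 / (pi\<^sup>2 * C)) * (trace A * (v \<bullet> v))"
        using c C trA by (intro mult_nonneg_nonneg add_nonneg_nonneg) auto
      hence "(12 * c / (pi\<^sup>2 * m\<^sup>2) + 12 / (pi\<^sup>2 * C)) * (trace A * (v \<bullet> v)) * 1
         \<le> (12 * c / (pi\<^sup>2 * m\<^sup>2) + 12 / (pi\<^sup>2 * C)) * (trace A * (v \<bullet> v)) * d"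
        using d by (intro mult_left_mono) auto
      thus ?thesis by (simp add: ac_simps)
    qed
    also have "(12 * c / (pi\<^sup>2 * m\<^sup>2) + 12 / (pi\<^sup>2 * C)) * d * (trace A * (v \<bullet> v)) = \<beta> * (v \<bullet> v)"
      unfolding \<beta>_def m_def d_def by (simp add: field_simps)
    finally show ?thesis unfolding \<alpha>_def by simp
  qed
  have main: "loewner_le (S ** A ** S) (\<alpha> *\<^sub>R dlog X A + \<beta> *\<^sub>R mat 1)"
    unfolding loewner_le_def psd_def sym_mat_def
  proof (intro conjI allI)
    show "transpose ((\<alpha> *\<^sub>R dlog X A + \<beta> *\<^sub>R mat 1) - S ** A ** S) =
      (\<alpha> *\<^sub>R dlog X A + \<beta> *\<^sub>R mat 1) - S ** A ** S"
      by (simp add: transpose_diff' transpose_add' transpose_scalar transpose_mat dlog_sym[OF X es A]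
           matrix_transpose_mul sS sA matrix_mul_assoc)
    fix v :: "real^'n"
    show "0 \<le> v \<bullet> (((\<alpha> *\<^sub>R dlog X A + \<beta> *\<^sub>R mat 1) - S ** A ** S) *v v)"
      using quad[of v]
      by (simp add: matrix_vector_mult_diff_rdistrib matrix_vector_mult_add_rdistrib inner_diff_right
          inner_add_right scaleR_matrix_vector_assoc[symmetric])
  qed
  thus ?thesis unfolding \<alpha>_def \<beta>_def S .
qed

end
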